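(* For all $n\ge2$, each of the four sets $S_n(I,J)$, $S_n(K,J)$, $S_n(J,I)$, $S_n(J,K)$ is mapped into itself by $T_3$.
   Context: A twisted $n$-gon is a map $P:\mathbb{Z}\to\mathbb{RP}^2$ with every three consecutive points non-collinear and $P_{i+n}=M(P_i)$ for a fixed $M\in\mathrm{PGL}_3(\mathbb{R})$; $\mathcal{P}_n$ is the set of classes modulo projective equivalence. $P$ is $3$-nice if $P_i,P_{i+1},P_{i+3},P_{i+4}$ are in general position for all $i$. $T_3(P)=P'$ with $P'_i=P_iP_{i+3}\cap P_{i+1}P_{i+4}$ (lines through the indicated points); it acts on classes of $3$-nice twisted $n$-gons. Inverse cross ratio: for four collinear points $A,B,C,D$, map their line projectively to the $x$-axis with coordinates $a,b,c,d$ and set $\chi(A,B,C,D)=\frac{(a-b)(c-d)}{(a-c)(b-d)}$ (value in $\mathbb{R}\cup\{\infty\}$, projectively invariant). Corner invariants: $x_{2i}=\chi(P_{i-2},P_{i-1},P_{i-2}P_{i-1}\cap P_iP_{i+1},P_{i-2}P_{i-1}\cap P_{i+1}P_{i+2})$ and $x_{2i+1}=\chi(P_{i+2},P_{i+1},P_{i+2}P_{i+1}\cap P_iP_{i-1},P_{i+2}P_{i+1}\cap P_{i-1}P_{i-2})$, with $x_{j+2n}=x_j$. Let $I=(-\infty,0)$, $J=(0,1)$, $K=(1,\infty)$. $S_n(I,J)$ is the set of $[P]\in\mathcal{P}_n$ whose corner invariants satisfy $(x_{2i},x_{2i+1})\in I\times J$ for all $i$; $S_n(K,J)$, $S_n(J,I)$,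 $S_n(J,K)$ are defined in the same way with $K\times J$, $J\times I$, $J\times K$. (Elements of these sets are automatically $3$-nice.) *)

theory Defs
  imports "HOL-Analysis.Analysis" "HOL-Analysis.Cross3"
begin

text \<open>Points of RP^2 are represented by nonzero homogeneous coordinate vectors in real^3.
  A map Z -> RP^2 is represented by a lift P :: int => real^3 with P i nonzero.\<close>

definition line_through :: "real^3 \<Rightarrow> real^3 \<Rightarrow> real^3" where
  "line_through A B = cross3 A B"

definition meet :: "real^3 \<Rightarrow> real^3 \<Rightarrow> real^3" where
  "meet l m = cross3 l m"

definition proj_collinear :: "real^3 \<Rightarrow> real^3 \<Rightarrow> real^3 \<Rightarrow> bool" where
  "proj_collinear A B C \<longleftrightarrow> A \<bullet> cross3 B C = 0"

definition twisted_ngon :: "nat \<Rightarrow> (int \<Rightarrow> real^3) \<Rightarrow> bool" where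
  "twisted_ngon n P \<longleftrightarrow>
     (\<forall>i. P i \<noteq> 0) \<and>
     (\<forall>i. \<not> proj_collinear (P i) (P (i+1)) (P (i+2))) \<and>
     (\<exists>M :: real^3^3. invertible M \<and>
        (\<forall>i. \<exists>c::real. c \<noteq> 0 \<and> P (i + int n) = c *\<^sub>R (M *v P i)))"

text \<open>Inverse cross ratio of four collinear points, with value in R \<union> {\<infinity>}; None encodes \<infinity>.
  For A, B, C, D in a common plane through 0 with unit normal u one has
  cross3 A B = [A,B] u where [A,B] is the 2x2 determinant in coordinates of the line, so
  (a-b)(c-d)/((a-c)(b-d)) = ((A x B).(C x D)) / ((A x C).(B x D)).\<close>
definition inv_cross_ratio :: "real^3 \<Rightarrow> real^3 \<Rightarrow> real^3 \<Rightarrow> real^3 \<Rightarrow> real option" where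
  "inv_cross_ratio A B C D =
     (let num = cross3 A B \<bullet> cross3 C D; den = cross3 A C \<bullet> cross3 B D
      in if den = 0 then None else Some (num / den))"

definition corner_even :: "(int \<Rightarrow> real^3) \<Rightarrow> int \<Rightarrow> real option" where
  "corner_even P i =
     inv_cross_ratio (P (i-2)) (P (i-1))
       (meet (line_through (P (i-2)) (P (i-1))) (line_through (P i) (P (i+1))))
       (meet (line_through (P (i-2)) (P (i-1))) (line_through (P (i+1)) (P (i+2))))"

definition corner_odd :: "(int \<Rightarrow> real^3) \<Rightarrow> int \<Rightarrow> real option" where
  "corner_odd P i =
     inv_cross_ratio (P (i+2)) (P (i+1))
       (meet (line_through (P (i+2)) (P (i+1))) (line_through (P i) (P (i-1))))
       (meet (line_through (P (i+2)) (P (i+1))) (line_through (P (i-1)) (P (i-2))))"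

definition Iint :: "real set" where "Iint = {..<0}"
definition Jint :: "real set" where "Jint = {0<..<1}"
definition Kint :: "real set" where "Kint = {1<..}"

text \<open>Membership of (the class of) P in S_n(X,Y). All conditions are invariant under
  rescaling representatives and under projective transformations, so this is a condition
  on the class [P].\<close>
definition in_S :: "nat \<Rightarrow> real set \<Rightarrow> real set \<Rightarrow> (int \<Rightarrow> real^3) \<Rightarrow> bool" where
  "in_S n X Y P \<longleftrightarrow> twisted_ngon n P \<and>
     (\<forall>i. \<exists>x y. corner_even P i = Some x \<and> x \<in> X \<and> corner_odd P i = Some y \<and> y \<in> Y)"

definition T3 :: "(int \<Rightarrow> real^3) \<Rightarrow> int \<Rightarrow> real^3" where
  "T3 P i = meet (line_through (P i) (P (i+3))) (line_through (P (i+1)) (P (i+4)))"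

end

theory Submission
  imports Defs
begin


definition dt :: "real^3 \<Rightarrow> real^3 \<Rightarrow> real^3 \<Rightarrow> real" where
  "dt x y z = x \<bullet> cross3 y z"

lemma dt_expand: "dt x y z = x$1*(y$2*z$3 - y$3*z$2) + x$2*(y$3*z$1 - y$1*z$3) + x$3*(y$1*z$2 - y$2*z$1)"
  unfolding dt_def cross3_def inner_vec_def sum_3 by (simp add: algebra_simps)

lemma dt_cyc: "dt y z x = dt x y z" by (simp add: dt_expand algebra_simps)
lemma dt_sw12: "dt y x z = - dt x y z" by (simp add: dt_expand algebra_simps)
lemma dt_sw13: "dt z y x = - dt x y z" by (simp add: dt_expand algebra_simps)
lemma dt_sw23: "dt x z y = - dt x y z" by (simp add: dt_expand algebra_simps)

definition comb :: "real^3 \<Rightarrow> real^3 \<Rightarrow> real^3 \<Rightarrow> real^3 \<Rightarrow> real^3" where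
  "comb u v w x = x$1 *\<^sub>R u + x$2 *\<^sub>R v + x$3 *\<^sub>R w"

lemma dt_comb: "dt (comb u v w x) (comb u v w y) (comb u v w z) = dt x y z * dt u v w"
  unfolding dt_expand comb_def by (simp add: algebra_simps)

lemma cramer: "dt u v w *\<^sub>R x = dt x v w *\<^sub>R u + dt u x w *\<^sub>R v + dt u v x *\<^sub>R w"
  unfolding vec_eq_iff forall_3 dt_expand by (simp add: algebra_simps)

lemma dt_mat: "dt (M *v x) (M *v y) (M *v z) = det M * dt x y z"
  unfolding dt_expand det_3 matrix_vector_mult_def sum_3 by (simp add: algebra_simps)



lemma cc: "cross3 (cross3 w x) (cross3 y z) = dt w x z *\<^sub>R y - dt w x y *\<^sub>R z"
  unfolding vec_eq_iff forall_3 dt_expand by (simp add: cross3_simps)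

lemma cr_lin1: "cross3 (a *\<^sub>R B - b *\<^sub>R A) (c *\<^sub>R B - d *\<^sub>R A) = (a*d - b*c) *\<^sub>R cross3 A B"
  unfolding vec_eq_iff forall_3 by (simp add: cross3_simps)
lemma cr_lin2: "cross3 A (a *\<^sub>R B - b *\<^sub>R A) = a *\<^sub>R cross3 A B"
  unfolding vec_eq_iff forall_3 by (simp add: cross3_simps)
lemma cr_lin3: "cross3 B (c *\<^sub>R B - d *\<^sub>R A) = d *\<^sub>R cross3 A B"
  unfolding vec_eq_iff forall_3 by (simp add: cross3_simps)

lemma pluecker: "dt A X Y * dt B Y Z - dt B X Y * dt A Y Z = dt A B Y * dt X Y Z"
  unfolding dt_expand by algebra

lemma CR:
  "inv_cross_ratio A B (cross3 (cross3 A B) (cross3 X Y)) (cross3 (cross3 A B) (cross3 Y Z)) =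
   (if cross3 A B = 0 \<or> dt A X Y = 0 \<or> dt B Y Z = 0 then None
    else Some (dt A B Y * dt X Y Z / (dt A X Y * dt B Y Z)))"
proof -
  have C: "cross3 (cross3 A B) (cross3 X Y) = dt A X Y *\<^sub>R B - dt B X Y *\<^sub>R A"
    unfolding vec_eq_iff forall_3 dt_expand by (simp add: cross3_simps)
  have D: "cross3 (cross3 A B) (cross3 Y Z) = dt A Y Z *\<^sub>R B - dt B Y Z *\<^sub>R A"
    unfolding vec_eq_iff forall_3 dt_expand by (simp add: cross3_simps)
  let ?L = "cross3 A B"
  have num: "?L \<bullet> cross3 (dt A X Y *\<^sub>R B - dt B X Y *\<^sub>R A) (dt A Y Z *\<^sub>R B - dt B Y Z *\<^sub>R A)
     = (dt A B Y * dt X Y Z) * (?L \<bullet> ?L)"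
    unfolding cr_lin1 pluecker by simp
  have den: "cross3 A (dt A X Y *\<^sub>R B - dt B X Y *\<^sub>R A) \<bullet> cross3 B (dt A Y Z *\<^sub>R B - dt B Y Z *\<^sub>R A)
     = (dt A X Y * dt B Y Z) * (?L \<bullet> ?L)"
    unfolding cr_lin2 cr_lin3 by simp
  have LL: "?L \<bullet> ?L = 0 \<longleftrightarrow> ?L = 0" by simp
  show ?thesis
    unfolding inv_cross_ratio_def Let_def C D num den
    using LL by (auto simp: field_simps)
qed



lemma comb_add: "comb u v w (x + y) = comb u v w x + comb u v w y"
  unfolding comb_def vec_eq_iff by (simp add: algebra_simps)
lemma comb_diff: "comb u v w (x - y) = comb u v w x - comb u v w y"
  unfolding comb_def vec_eq_iff by (simp add: algebra_simps)
lemma comb_scale: "comb u v w (a *\<^sub>R x) = a *\<^sub>R comb u v w x"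
  unfolding comb_def vec_eq_iff by (simp add: algebra_simps)
lemma comb_e: "comb u v w (vector[1,0,0]) = u" "comb u v w (vector[0,1,0]) = v" "comb u v w (vector[0,0,1]) = w"
  unfolding comb_def by (simp_all add: vector_3)

lemma rec3: assumes "dt u v w = 1" "dt v w x = 1"
  shows "x = dt u v x *\<^sub>R w - dt u w x *\<^sub>R v + u"
proof -
  have "dt u v w *\<^sub>R x = dt x v w *\<^sub>R u + dt u x w *\<^sub>R v + dt u v x *\<^sub>R w" by (rule cramer)
  moreover have "dt x v w = dt v w x" unfolding dt_expand by (simp add: algebra_simps)
  moreover have "dt u x w = - dt u w x" unfolding dt_expand by (simp add: algebra_simps)
  ultimately show ?thesis using assms by (simp add: algebra_simps)
qed

lemma dt_lin3: "dt p q (a *\<^sub>R x - c *\<^sub>R w + v) = a * dt p q x - c * dt p q w + dt p q v"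
  unfolding dt_expand by (simp add: algebra_simps)
lemma dt_self: "dt u x x = 0" "dt x x u = 0" "dt x u x = 0"
  unfolding dt_expand by (simp_all add: algebra_simps)

lemma T3form: "cross3 (cross3 u x) (cross3 v (a1 *\<^sub>R x - c1 *\<^sub>R w + v)) =
   (dt u w x * c1) *\<^sub>R v - (dt u v x * c1) *\<^sub>R w + (dt u v x * a1) *\<^sub>R x"
proof -
  have "cross3 (cross3 u x) (cross3 v (a1 *\<^sub>R x - c1 *\<^sub>R w + v)) =
     dt u x (a1 *\<^sub>R x - c1 *\<^sub>R w + v) *\<^sub>R v - dt u x v *\<^sub>R (a1 *\<^sub>R x - c1 *\<^sub>R w + v)"
    by (rule cc)
  also have "\<dots> = (dt u w x * c1 - dt u v x) *\<^sub>R v + dt u v x *\<^sub>R (a1 *\<^sub>R x - c1 *\<^sub>R w + v)"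
    unfolding dt_lin3 dt_self using dt_sw23[of u x w] dt_sw23[of u x v] by simp
  also have "\<dots> = (dt u w x * c1) *\<^sub>R v - (dt u v x * c1) *\<^sub>R w + (dt u v x * a1) *\<^sub>R x"
    by (simp add: algebra_simps)
  finally show ?thesis .
qed



lemma typeD:
  fixes r0 r1 r2 r3 r4 r5 r6 r7 :: "real^3"
  assumes N1: "dt r1 r2 r3 = 1" and N2: "dt r2 r3 r4 = 1" and N3: "dt r3 r4 r5 = 1"
    and N4: "dt r4 r5 r6 = 1" and N5: "dt r5 r6 r7 = 1"
    and a0: "a0 = dt r0 r1 r3" and a1: "a1 = dt r1 r2 r4" and a2: "a2 = dt r2 r3 r5"
    and a3: "a3 = dt r3 r4 r6" and a4: "a4 = dt r4 r5 r7"
    and c0: "c0 = dt r0 r2 r3" and c1: "c1 = dt r1 r3 r4" and c2: "c2 = dt r2 r4 r5"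
    and c3: "c3 = dt r3 r5 r6" and c4: "c4 = dt r4 r6 r7"
  defines "t0 \<equiv> cross3 (cross3 r0 r3) (cross3 r1 r4)"
    and "t1 \<equiv> cross3 (cross3 r1 r4) (cross3 r2 r5)"
    and "t2 \<equiv> cross3 (cross3 r2 r5) (cross3 r3 r6)"
    and "t3 \<equiv> cross3 (cross3 r3 r6) (cross3 r4 r7)"
  shows "dt t0 t1 t2 =
           (c0 * c1 * a1 * a2 - a0 * a1 * a2 - c0 * c1 * c2) *
           (c1 * c2 * a2 * a3 - a1 * a2 * a3 - c1 * c2 * c3)"
    and "dt t0 t1 t3 = a3 *
           (c0 * c1 * a1 * a2 - a0 * a1 * a2 - c0 * c1 * c2) *
           ((c1 * c2 - a1) * (a3 * a4 - c4) - c1 * a4)"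
    and "dt t0 t2 t3 = c1 *
           (c2 * c3 * a3 * a4 - a2 * a3 * a4 - c2 * c3 * c4) *
           ((c0 * c1 - a0) * (a2 * a3 - c3) - c0 * a3)"
proof -
  have R1: "r4 = a1 *\<^sub>R r3 - c1 *\<^sub>R r2 + r1" unfolding a1 c1 by (rule rec3[OF N1 N2])
  have R2: "r5 = a2 *\<^sub>R r4 - c2 *\<^sub>R r3 + r2" unfolding a2 c2 by (rule rec3[OF N2 N3])
  have R3: "r6 = a3 *\<^sub>R r5 - c3 *\<^sub>R r4 + r3" unfolding a3 c3 by (rule rec3[OF N3 N4])
  have R4: "r7 = a4 *\<^sub>R r6 - c4 *\<^sub>R r5 + r4" unfolding a4 c4 by (rule rec3[OF N4 N5])
  have T0: "t0 = (c0 * c1) *\<^sub>R r1 - (a0 * c1) *\<^sub>R r2 + (a0 * a1) *\<^sub>R r3"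
    unfolding t0_def using T3form[of r0 r3 r1 a1 c1 r2] unfolding R1[symmetric] a0 c0 by (simp add: mult.commute)
  have T1: "t1 = (c1 * c2) *\<^sub>R r2 - (a1 * c2) *\<^sub>R r3 + (a1 * a2) *\<^sub>R r4"
    unfolding t1_def using T3form[of r1 r4 r2 a2 c2 r3] unfolding R2[symmetric] a1 c1 by (simp add: mult.commute)
  have T2: "t2 = (c2 * c3) *\<^sub>R r3 - (a2 * c3) *\<^sub>R r4 + (a2 * a3) *\<^sub>R r5"
    unfolding t2_def using T3form[of r2 r5 r3 a3 c3 r4] unfolding R3[symmetric] a2 c2 by (simp add: mult.commute)
  have T3: "t3 = (c3 * c4) *\<^sub>R r4 - (a3 * c4) *\<^sub>R r5 + (a3 * a4) *\<^sub>R r6"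
    unfolding t3_def using T3form[of r3 r6 r4 a4 c4 r5] unfolding R4[symmetric] a3 c3 by (simp add: mult.commute)
  define f1 :: "real^3" where "f1 = vector[1,0,0]"
  define f2 :: "real^3" where "f2 = vector[0,1,0]"
  define f3 :: "real^3" where "f3 = vector[0,0,1]"
  define f4 where "f4 = a1 *\<^sub>R f3 - c1 *\<^sub>R f2 + f1"
  define f5 where "f5 = a2 *\<^sub>R f4 - c2 *\<^sub>R f3 + f2"
  define f6 where "f6 = a3 *\<^sub>R f5 - c3 *\<^sub>R f4 + f3"
  let ?cb = "comb r1 r2 r3"
  have e1: "r1 = ?cb f1" unfolding f1_def comb_e ..
  have e2: "r2 = ?cb f2" unfolding f2_def comb_e ..
  have e3: "r3 = ?cb f3" unfolding f3_def comb_e ..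
  have e4: "r4 = ?cb f4" unfolding R1 f4_def comb_add comb_diff comb_scale e1[symmetric] e2[symmetric] e3[symmetric] ..
  have e5: "r5 = ?cb f5" unfolding R2 f5_def comb_add comb_diff comb_scale e4[symmetric] e2[symmetric] e3[symmetric] ..
  have e6: "r6 = ?cb f6" unfolding R3 f6_def comb_add comb_diff comb_scale e4[symmetric] e5[symmetric] e3[symmetric] ..
  define U0 where "U0 = (c0 * c1) *\<^sub>R f1 - (a0 * c1) *\<^sub>R f2 + (a0 * a1) *\<^sub>R f3"
  define U1 where "U1 = (c1 * c2) *\<^sub>R f2 - (a1 * c2) *\<^sub>R f3 + (a1 * a2) *\<^sub>R f4"
  define U2 where "U2 = (c2 * c3) *\<^sub>R f3 - (a2 * c3) *\<^sub>R f4 + (a2 * a3) *\<^sub>R f5"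
  define U3 where "U3 = (c3 * c4) *\<^sub>R f4 - (a3 * c4) *\<^sub>R f5 + (a3 * a4) *\<^sub>R f6"
  have u0: "t0 = ?cb U0" unfolding T0 U0_def comb_add comb_diff comb_scale e1[symmetric] e2[symmetric] e3[symmetric] ..
  have u1: "t1 = ?cb U1" unfolding T1 U1_def comb_add comb_diff comb_scale e4[symmetric] e2[symmetric] e3[symmetric] ..
  have u2: "t2 = ?cb U2" unfolding T2 U2_def comb_add comb_diff comb_scale e4[symmetric] e5[symmetric] e3[symmetric] ..
  have u3: "t3 = ?cb U3" unfolding T3 U3_def comb_add comb_diff comb_scale e4[symmetric] e5[symmetric] e6[symmetric] ..
  note comps = f1_def f2_def f3_def f4_def f5_def f6_def U0_def U1_def U2_def U3_def vector_3
  show "dt t0 t1 t2 =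
           (c0 * c1 * a1 * a2 - a0 * a1 * a2 - c0 * c1 * c2) *
           (c1 * c2 * a2 * a3 - a1 * a2 * a3 - c1 * c2 * c3)"
    unfolding u0 u1 u2 dt_comb N1 by (simp add: dt_expand comps) algebra
  show "dt t0 t1 t3 = a3 *
           (c0 * c1 * a1 * a2 - a0 * a1 * a2 - c0 * c1 * c2) *
           ((c1 * c2 - a1) * (a3 * a4 - c4) - c1 * a4)"
    unfolding u0 u1 u3 dt_comb N1 by (simp add: dt_expand comps) algebra
  show "dt t0 t2 t3 = c1 *
           (c2 * c3 * a3 * a4 - a2 * a3 * a4 - c2 * c3 * c4) *
           ((c0 * c1 - a0) * (a2 * a3 - c3) - c0 * a3)"
    unfolding u0 u2 u3 dt_comb N1 by (simp add: dt_expand comps) algebra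
qed



lemma ce_formula: "corner_even P i =
  (if cross3 (P(i-2)) (P(i-1)) = 0 \<or> dt (P(i-2)) (P i) (P(i+1)) = 0 \<or> dt (P(i-1)) (P(i+1)) (P(i+2)) = 0
   then None else Some (dt (P(i-2)) (P(i-1)) (P(i+1)) * dt (P i) (P(i+1)) (P(i+2)) /
      (dt (P(i-2)) (P i) (P(i+1)) * dt (P(i-1)) (P(i+1)) (P(i+2)))))"
  unfolding corner_even_def meet_def line_through_def CR ..

lemma co_formula: "corner_odd P i =
  (if cross3 (P(i+2)) (P(i+1)) = 0 \<or> dt (P(i+2)) (P i) (P(i-1)) = 0 \<or> dt (P(i+1)) (P(i-1)) (P(i-2)) = 0
   then None else Some (dt (P(i+2)) (P(i+1)) (P(i-1)) * dt (P i) (P(i-1)) (P(i-2)) /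
      (dt (P(i+2)) (P i) (P(i-1)) * dt (P(i+1)) (P(i-1)) (P(i-2)))))"
  unfolding corner_odd_def meet_def line_through_def CR ..

lemma dt_scale: "dt (a *\<^sub>R x) (b *\<^sub>R y) (c *\<^sub>R z) = a * b * c * dt x y z"
  unfolding dt_def by (simp add: cross_mult_left cross_mult_right)

lemma cross_scale: "cross3 (a *\<^sub>R x) (b *\<^sub>R y) = (a * b) *\<^sub>R cross3 x y"
  by (simp add: cross_mult_left cross_mult_right)

lemma ce_scale: assumes "\<forall>j. s j \<noteq> 0"
  shows "corner_even (\<lambda>j. s j *\<^sub>R P j) i = corner_even P i"
  unfolding ce_formula dt_scale cross_scale using assms by (auto simp: field_simps)

lemma co_scale: assumes "\<forall>j. s j \<noteq> 0"
  shows "corner_odd (\<lambda>j. s j *\<^sub>R P j) i = corner_odd P i"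
  unfolding co_formula dt_scale cross_scale using assms by (auto simp: field_simps)

lemma T3_scale: "T3 (\<lambda>j. s j *\<^sub>R P j) = (\<lambda>i. (s i * s (i+3) * s (i+1) * s (i+4)) *\<^sub>R T3 P i)"
  unfolding T3_def meet_def line_through_def cross_scale by (simp add: mult.commute mult.left_commute)

lemma ce_shift: "corner_even (\<lambda>j. P (j + m)) k = corner_even P (k + m)"
  unfolding corner_even_def by (simp add: algebra_simps)
lemma co_shift: "corner_odd (\<lambda>j. P (j + m)) k = corner_odd P (k + m)"
  unfolding corner_odd_def by (simp add: algebra_simps)
lemma T3_shift: "T3 (\<lambda>j. P (j + m)) = (\<lambda>k. T3 P (k + m))"
  unfolding T3_def by (simp add: algebra_simps)



lemma core:
  fixes Q :: "int \<Rightarrow> real^3" and pe po :: "int \<Rightarrow> real"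
  assumes N: "\<And>j. 0 \<le> j \<Longrightarrow> dt (Q j) (Q (j+1)) (Q (j+2)) = 1"
    and ce: "\<And>j. corner_even Q j = Some (pe j)" and co: "\<And>j. corner_odd Q j = Some (po j)"
    and pnz: "\<And>j. pe j \<noteq> 0"
    and Eh: "\<And>j. 1 - pe j - po (j+1) \<noteq> 0"
    and Fh: "\<And>j. (1 - pe j) * (1 - po (j+2)) - pe (j+1) * po (j+1) \<noteq> 0"
  shows "corner_even (T3 Q) 2 = Some (pe 3 * (1 - pe 2 - po 3) / ((1 - pe 2) * (1 - po 4) - pe 3 * po 3))"
    and "corner_odd (T3 Q) 2 = Some (po 5 * (1 - pe 5 - po 6) / ((1 - pe 4) * (1 - po 6) - pe 5 * po 5))"
proof -
  have N0: "dt (Q 0) (Q 1) (Q 2) = 1" using N[of 0] by simp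
  have N1: "dt (Q 1) (Q 2) (Q 3) = 1" using N[of 1] by simp
  have N2: "dt (Q 2) (Q 3) (Q 4) = 1" using N[of 2] by simp
  have N3: "dt (Q 3) (Q 4) (Q 5) = 1" using N[of 3] by simp
  have N4: "dt (Q 4) (Q 5) (Q 6) = 1" using N[of 4] by simp
  have N5: "dt (Q 5) (Q 6) (Q 7) = 1" using N[of 5] by simp
  have N6: "dt (Q 6) (Q 7) (Q 8) = 1" using N[of 6] by simp
  have N7: "dt (Q 7) (Q 8) (Q 9) = 1" using N[of 7] by simp
  define a0 where "a0 = dt (Q 0) (Q 1) (Q 3)"
  define c0 where "c0 = dt (Q 0) (Q 2) (Q 3)"
  define a1 where "a1 = dt (Q 1) (Q 2) (Q 4)"
  define c1 where "c1 = dt (Q 1) (Q 3) (Q 4)"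
  define a2 where "a2 = dt (Q 2) (Q 3) (Q 5)"
  define c2 where "c2 = dt (Q 2) (Q 4) (Q 5)"
  define a3 where "a3 = dt (Q 3) (Q 4) (Q 6)"
  define c3 where "c3 = dt (Q 3) (Q 5) (Q 6)"
  define a4 where "a4 = dt (Q 4) (Q 5) (Q 7)"
  define c4 where "c4 = dt (Q 4) (Q 6) (Q 7)"
  define a5 where "a5 = dt (Q 5) (Q 6) (Q 8)"
  define c5 where "c5 = dt (Q 5) (Q 7) (Q 8)"
  define a6 where "a6 = dt (Q 6) (Q 7) (Q 9)"
  define c6 where "c6 = dt (Q 6) (Q 8) (Q 9)"
  have pe2: "c0 \<noteq> 0 \<and> c1 \<noteq> 0 \<and> pe 2 = a0 / (c0 * c1)"
    using ce_formula[of Q 2, unfolded ce[of 2]] N2 by (simp add: a0_def[symmetric] c0_def[symmetric] a1_def[symmetric] c1_def[symmetric] a2_def[symmetric] c2_def[symmetric] a3_def[symmetric] c3_def[symmetric] a4_def[symmetric] c4_def[symmetric] a5_def[symmetric] c5_def[symmetric] a6_def[symmetric] c6_def[symmetric] split: if_splits)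
  have a0nz: "a0 \<noteq> 0" using pnz[of 2] pe2 by auto
  have pe3: "c1 \<noteq> 0 \<and> c2 \<noteq> 0 \<and> pe 3 = a1 / (c1 * c2)"
    using ce_formula[of Q 3, unfolded ce[of 3]] N3 by (simp add: a0_def[symmetric] c0_def[symmetric] a1_def[symmetric] c1_def[symmetric] a2_def[symmetric] c2_def[symmetric] a3_def[symmetric] c3_def[symmetric] a4_def[symmetric] c4_def[symmetric] a5_def[symmetric] c5_def[symmetric] a6_def[symmetric] c6_def[symmetric] split: if_splits)
  have a1nz: "a1 \<noteq> 0" using pnz[of 3] pe3 by auto
  have pe4: "c2 \<noteq> 0 \<and> c3 \<noteq> 0 \<and> pe 4 = a2 / (c2 * c3)"
    using ce_formula[of Q 4, unfolded ce[of 4]] N4 by (simp add: a0_def[symmetric] c0_def[symmetric] a1_def[symmetric] c1_def[symmetric] a2_def[symmetric] c2_def[symmetric] a3_def[symmetric] c3_def[symmetric] a4_def[symmetric] c4_def[symmetric] a5_def[symmetric] c5_def[symmetric] a6_def[symmetric] c6_def[symmetric] split: if_splits)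
  have a2nz: "a2 \<noteq> 0" using pnz[of 4] pe4 by auto
  have pe5: "c3 \<noteq> 0 \<and> c4 \<noteq> 0 \<and> pe 5 = a3 / (c3 * c4)"
    using ce_formula[of Q 5, unfolded ce[of 5]] N5 by (simp add: a0_def[symmetric] c0_def[symmetric] a1_def[symmetric] c1_def[symmetric] a2_def[symmetric] c2_def[symmetric] a3_def[symmetric] c3_def[symmetric] a4_def[symmetric] c4_def[symmetric] a5_def[symmetric] c5_def[symmetric] a6_def[symmetric] c6_def[symmetric] split: if_splits)
  have a3nz: "a3 \<noteq> 0" using pnz[of 5] pe5 by auto
  have pe6: "c4 \<noteq> 0 \<and> c5 \<noteq> 0 \<and> pe 6 = a4 / (c4 * c5)"
    using ce_formula[of Q 6, unfolded ce[of 6]] N6 by (simp add: a0_def[symmetric] c0_def[symmetric] a1_def[symmetric] c1_def[symmetric] a2_def[symmetric] c2_def[symmetric] a3_def[symmetric] c3_def[symmetric] a4_def[symmetric] c4_def[symmetric] a5_def[symmetric] c5_def[symmetric] a6_def[symmetric] c6_def[symmetric] split: if_splits)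
  have a4nz: "a4 \<noteq> 0" using pnz[of 6] pe6 by auto
  have pe7: "c5 \<noteq> 0 \<and> c6 \<noteq> 0 \<and> pe 7 = a5 / (c5 * c6)"
    using ce_formula[of Q 7, unfolded ce[of 7]] N7 by (simp add: a0_def[symmetric] c0_def[symmetric] a1_def[symmetric] c1_def[symmetric] a2_def[symmetric] c2_def[symmetric] a3_def[symmetric] c3_def[symmetric] a4_def[symmetric] c4_def[symmetric] a5_def[symmetric] c5_def[symmetric] a6_def[symmetric] c6_def[symmetric] split: if_splits)
  have a5nz: "a5 \<noteq> 0" using pnz[of 7] pe7 by auto
  have po3: "po 3 = c2 / (a2 * a1)"
    using co_formula[of Q 3, unfolded co[of 3]] N1 dt_sw13[of "Q 2" "Q 4" "Q 5"] dt_sw13[of "Q 1" "Q 2" "Q 3"] dt_sw13[of "Q 2" "Q 3" "Q 5"] dt_sw13[of "Q 1" "Q 2" "Q 4"]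
    by (simp add: a0_def[symmetric] c0_def[symmetric] a1_def[symmetric] c1_def[symmetric] a2_def[symmetric] c2_def[symmetric] a3_def[symmetric] c3_def[symmetric] a4_def[symmetric] c4_def[symmetric] a5_def[symmetric] c5_def[symmetric] a6_def[symmetric] c6_def[symmetric] split: if_splits)
  have po4: "po 4 = c3 / (a3 * a2)"
    using co_formula[of Q 4, unfolded co[of 4]] N2 dt_sw13[of "Q 3" "Q 5" "Q 6"] dt_sw13[of "Q 2" "Q 3" "Q 4"] dt_sw13[of "Q 3" "Q 4" "Q 6"] dt_sw13[of "Q 2" "Q 3" "Q 5"]
    by (simp add: a0_def[symmetric] c0_def[symmetric] a1_def[symmetric] c1_def[symmetric] a2_def[symmetric] c2_def[symmetric] a3_def[symmetric] c3_def[symmetric] a4_def[symmetric] c4_def[symmetric] a5_def[symmetric] c5_def[symmetric] a6_def[symmetric] c6_def[symmetric] split: if_splits)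
  have po5: "po 5 = c4 / (a4 * a3)"
    using co_formula[of Q 5, unfolded co[of 5]] N3 dt_sw13[of "Q 4" "Q 6" "Q 7"] dt_sw13[of "Q 3" "Q 4" "Q 5"] dt_sw13[of "Q 4" "Q 5" "Q 7"] dt_sw13[of "Q 3" "Q 4" "Q 6"]
    by (simp add: a0_def[symmetric] c0_def[symmetric] a1_def[symmetric] c1_def[symmetric] a2_def[symmetric] c2_def[symmetric] a3_def[symmetric] c3_def[symmetric] a4_def[symmetric] c4_def[symmetric] a5_def[symmetric] c5_def[symmetric] a6_def[symmetric] c6_def[symmetric] split: if_splits)
  have po6: "po 6 = c5 / (a5 * a4)"
    using co_formula[of Q 6, unfolded co[of 6]] N4 dt_sw13[of "Q 5" "Q 7" "Q 8"] dt_sw13[of "Q 4" "Q 5" "Q 6"] dt_sw13[of "Q 5" "Q 6" "Q 8"] dt_sw13[of "Q 4" "Q 5" "Q 7"]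
    by (simp add: a0_def[symmetric] c0_def[symmetric] a1_def[symmetric] c1_def[symmetric] a2_def[symmetric] c2_def[symmetric] a3_def[symmetric] c3_def[symmetric] a4_def[symmetric] c4_def[symmetric] a5_def[symmetric] c5_def[symmetric] a6_def[symmetric] c6_def[symmetric] split: if_splits)
  define E0 where "E0 = c0 * c1 * a1 * a2 - a0 * a1 * a2 - c0 * c1 * c2"
  define E1 where "E1 = c1 * c2 * a2 * a3 - a1 * a2 * a3 - c1 * c2 * c3"
  define E2 where "E2 = c2 * c3 * a3 * a4 - a2 * a3 * a4 - c2 * c3 * c4"
  define E3 where "E3 = c3 * c4 * a4 * a5 - a3 * a4 * a5 - c3 * c4 * c5"
  define F0 where "F0 = (c0 * c1 - a0) * (a2 * a3 - c3) - c0 * a3"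
  define F1 where "F1 = (c1 * c2 - a1) * (a3 * a4 - c4) - c1 * a4"
  define F2 where "F2 = (c2 * c3 - a2) * (a4 * a5 - c5) - c2 * a5"
  have E0e: "E0 = c0 * c1 * a1 * a2 * (1 - pe 2 - po 3)"
    unfolding E0_def using pe2 po3 a1nz a2nz by (simp add: field_simps)
  have E0nz: "E0 \<noteq> 0" using E0e pe2 pe3 a1nz a2nz Eh[of 2] by simp
  have E1e: "E1 = c1 * c2 * a2 * a3 * (1 - pe 3 - po 4)"
    unfolding E1_def using pe3 po4 a2nz a3nz by (simp add: field_simps)
  have E1nz: "E1 \<noteq> 0" using E1e pe3 pe4 a2nz a3nz Eh[of 3] by simp
  have E2e: "E2 = c2 * c3 * a3 * a4 * (1 - pe 4 - po 5)"
    unfolding E2_def using pe4 po5 a3nz a4nz by (simp add: field_simps)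
  have E2nz: "E2 \<noteq> 0" using E2e pe4 pe5 a3nz a4nz Eh[of 4] by simp
  have E3e: "E3 = c3 * c4 * a4 * a5 * (1 - pe 5 - po 6)"
    unfolding E3_def using pe5 po6 a4nz a5nz by (simp add: field_simps)
  have E3nz: "E3 \<noteq> 0" using E3e pe5 pe6 a4nz a5nz Eh[of 5] by simp
  have F0e: "F0 = c0 * c1 * a2 * a3 * ((1 - pe 2) * (1 - po 4) - pe 3 * po 3)"
    unfolding F0_def using pe2 pe3 po3 po4 a1nz a2nz a3nz by (simp add: field_simps) algebra
  have F0nz: "F0 \<noteq> 0" using F0e pe2 pe3 a2nz a3nz Fh[of 2] by simp
  have F1e: "F1 = c1 * c2 * a3 * a4 * ((1 - pe 3) * (1 - po 5) - pe 4 * po 4)"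
    unfolding F1_def using pe3 pe4 po4 po5 a2nz a3nz a4nz by (simp add: field_simps) algebra
  have F1nz: "F1 \<noteq> 0" using F1e pe3 pe4 a3nz a4nz Fh[of 3] by simp
  have F2e: "F2 = c2 * c3 * a4 * a5 * ((1 - pe 4) * (1 - po 6) - pe 5 * po 5)"
    unfolding F2_def using pe4 pe5 po5 po6 a3nz a4nz a5nz by (simp add: field_simps) algebra
  have F2nz: "F2 \<noteq> 0" using F2e pe4 pe5 a4nz a5nz Fh[of 4] by simp
  have t0: "T3 Q 0 = cross3 (cross3 (Q 0) (Q 3)) (cross3 (Q 1) (Q 4))" by (simp add: T3_def meet_def line_through_def)
  have t1: "T3 Q 1 = cross3 (cross3 (Q 1) (Q 4)) (cross3 (Q 2) (Q 5))" by (simp add: T3_def meet_def line_through_def)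
  have t2: "T3 Q 2 = cross3 (cross3 (Q 2) (Q 5)) (cross3 (Q 3) (Q 6))" by (simp add: T3_def meet_def line_through_def)
  have t3: "T3 Q 3 = cross3 (cross3 (Q 3) (Q 6)) (cross3 (Q 4) (Q 7))" by (simp add: T3_def meet_def line_through_def)
  have t4: "T3 Q 4 = cross3 (cross3 (Q 4) (Q 7)) (cross3 (Q 5) (Q 8))" by (simp add: T3_def meet_def line_through_def)
  note D0 = typeD[OF N1 N2 N3 N4 N5 a0_def a1_def a2_def a3_def a4_def c0_def c1_def c2_def c3_def c4_def]
  note D1 = typeD[OF N2 N3 N4 N5 N6 a1_def a2_def a3_def a4_def a5_def c1_def c2_def c3_def c4_def c5_def]
  note D2 = typeD[OF N3 N4 N5 N6 N7 a2_def a3_def a4_def a5_def a6_def c2_def c3_def c4_def c5_def c6_def]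
  have D012: "dt (T3 Q 0) (T3 Q 1) (T3 Q 2) = E0 * E1" unfolding t0 t1 t2 D0(1) E0_def E1_def ..
  have D013: "dt (T3 Q 0) (T3 Q 1) (T3 Q 3) = a3 * E0 * F1" unfolding t0 t1 t3 D0(2) E0_def F1_def ..
  have D023: "dt (T3 Q 0) (T3 Q 2) (T3 Q 3) = c1 * E2 * F0" unfolding t0 t2 t3 D0(3) E2_def F0_def ..
  have D124: "dt (T3 Q 1) (T3 Q 2) (T3 Q 4) = a4 * E1 * F2" unfolding t1 t2 t4 D1(2) E1_def F2_def ..
  have D134: "dt (T3 Q 1) (T3 Q 3) (T3 Q 4) = c2 * E3 * F1" unfolding t1 t3 t4 D1(3) E3_def F1_def ..
  have D234: "dt (T3 Q 2) (T3 Q 3) (T3 Q 4) = E2 * E3" unfolding t2 t3 t4 D2(1) E2_def E3_def ..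
  have cr01: "cross3 (T3 Q 0) (T3 Q 1) \<noteq> 0"
  proof
    assume "cross3 (T3 Q 0) (T3 Q 1) = 0"
    then have "dt (T3 Q 2) (T3 Q 0) (T3 Q 1) = 0" by (simp add: dt_def)
    then show False using D012 E0nz E1nz dt_cyc[of "T3 Q 0" "T3 Q 1" "T3 Q 2"] by simp
  qed
  have cr43: "cross3 (T3 Q 4) (T3 Q 3) \<noteq> 0"
  proof
    assume "cross3 (T3 Q 4) (T3 Q 3) = 0"
    then have "dt (T3 Q 2) (T3 Q 4) (T3 Q 3) = 0" by (simp add: dt_def)
    then show False using D234 E2nz E3nz dt_sw23[of "T3 Q 2" "T3 Q 3" "T3 Q 4"] by simp
  qed
  show "corner_even (T3 Q) 2 = Some (pe 3 * (1 - pe 2 - po 3) / ((1 - pe 2) * (1 - po 4) - pe 3 * po 3))"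
  proof -
    have "corner_even (T3 Q) 2 = Some (a3 * E0 * F1 * (E2 * E3) / (c1 * E2 * F0 * (c2 * E3 * F1)))"
      unfolding ce_formula[of "T3 Q" 2] by (simp add: cr01 D013 D234 D023 D134 E0nz E2nz E3nz F0nz F1nz a3nz pe3 pe4)
    also have "\<dots> = Some (pe 3 * (1 - pe 2 - po 3) / ((1 - pe 2) * (1 - po 4) - pe 3 * po 3))"
    proof -
      have h1: "1 - pe 2 - po 3 = E0 / (c0 * c1 * a1 * a2)" using E0e pe2 pe3 a1nz a2nz by (simp add: field_simps)
      have h2: "(1 - pe 2) * (1 - po 4) - pe 3 * po 3 = F0 / (c0 * c1 * a2 * a3)" using F0e pe2 pe3 a2nz a3nz by (simp add: field_simps)
      show ?thesis unfolding h1 h2 using pe2 pe3 pe4 a0nz a1nz a2nz a3nz E0nz E1nz E2nz E3nz F0nz F1nz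
        by (simp add: field_simps)
    qed
    finally show ?thesis .
  qed
  show "corner_odd (T3 Q) 2 = Some (po 5 * (1 - pe 5 - po 6) / ((1 - pe 4) * (1 - po 6) - pe 5 * po 5))"
  proof -
    have s: "dt (T3 Q 4) (T3 Q 3) (T3 Q 1) = - dt (T3 Q 1) (T3 Q 3) (T3 Q 4)"
      "dt (T3 Q 2) (T3 Q 1) (T3 Q 0) = - dt (T3 Q 0) (T3 Q 1) (T3 Q 2)"
      "dt (T3 Q 4) (T3 Q 2) (T3 Q 1) = - dt (T3 Q 1) (T3 Q 2) (T3 Q 4)"
      "dt (T3 Q 3) (T3 Q 1) (T3 Q 0) = - dt (T3 Q 0) (T3 Q 1) (T3 Q 3)"
      by (rule dt_sw13)+
    have "corner_odd (T3 Q) 2 = Some (c2 * E3 * F1 * (E0 * E1) / (a4 * E1 * F2 * (a3 * E0 * F1)))"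
      unfolding co_formula[of "T3 Q" 2] by (simp add: cr43 s D012 D013 D124 D134 E0nz E1nz E2nz E3nz F1nz F2nz pe4 pe5 a3nz a4nz)
    also have "\<dots> = Some (po 5 * (1 - pe 5 - po 6) / ((1 - pe 4) * (1 - po 6) - pe 5 * po 5))"
    proof -
      have h1: "1 - pe 5 - po 6 = E3 / (c3 * c4 * a4 * a5)" using E3e pe5 pe6 a4nz a5nz by (simp add: field_simps)
      have h2: "(1 - pe 4) * (1 - po 6) - pe 5 * po 5 = F2 / (c2 * c3 * a4 * a5)" using F2e pe4 pe5 a4nz a5nz by (simp add: field_simps)
      show ?thesis unfolding h1 h2 using pe4 pe5 pe6 po5 a2nz a3nz a4nz a5nz E0nz E1nz E2nz E3nz F1nz F2nz
        by (simp add: field_simps)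
    qed
    finally show ?thesis .
  qed
qed



fun lamf :: "(nat \<Rightarrow> real) \<Rightarrow> nat \<Rightarrow> real" where
  "lamf D 0 = 1"
| "lamf D (Suc 0) = 1"
| "lamf D (Suc (Suc k)) = 1 / (lamf D k * lamf D (Suc k) * D k)"

lemma lamf_nz: "(\<forall>k. D k \<noteq> 0) \<Longrightarrow> lamf D k \<noteq> 0"
  by (induction D k rule: lamf.induct) auto

lemma lamf_prod: assumes "\<forall>k. D k \<noteq> 0"
  shows "lamf D k * lamf D (Suc k) * lamf D (Suc (Suc k)) * D k = 1"
  using lamf_nz[OF assms, of k] lamf_nz[OF assms, of "Suc k"] assms by (simp add: field_simps)

lemma normalize:
  fixes P :: "int \<Rightarrow> real^3"
  assumes nz: "\<forall>j. dt (P j) (P (j+1)) (P (j+2)) \<noteq> 0"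
  shows "\<exists>s. (\<forall>j. s j \<noteq> 0) \<and> (\<forall>j\<ge>0. dt (s j *\<^sub>R P j) (s (j+1) *\<^sub>R P (j+1)) (s (j+2) *\<^sub>R P (j+2)) = 1)"
proof -
  define D where "D k = dt (P (int k)) (P (int k + 1)) (P (int k + 2))" for k
  have Dnz: "\<forall>k. D k \<noteq> 0" using nz unfolding D_def by simp
  define s where "s j = (if 0 \<le> j then lamf D (nat j) else 1)" for j
  have snz: "\<forall>j. s j \<noteq> 0" using lamf_nz[OF Dnz] unfolding s_def by simp
  moreover have "dt (s j *\<^sub>R P j) (s (j+1) *\<^sub>R P (j+1)) (s (j+2) *\<^sub>R P (j+2)) = 1" if "0 \<le> j" for j
  proof -
    have e1: "nat (j+1) = Suc (nat j)" "nat (j+2) = Suc (Suc (nat j))" using that by auto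
    have e2: "D (nat j) = dt (P j) (P (j+1)) (P (j+2))" unfolding D_def using that by simp
    show ?thesis unfolding dt_scale s_def using that lamf_prod[OF Dnz, of "nat j"] e1 e2
      by (simp add: mult.assoc)
  qed
  ultimately show ?thesis by blast
qed

lemma T3_corners:
  fixes P :: "int \<Rightarrow> real^3" and pe po :: "int \<Rightarrow> real"
  assumes nz: "\<forall>j. dt (P j) (P (j+1)) (P (j+2)) \<noteq> 0"
    and ce: "\<forall>j. corner_even P j = Some (pe j)" and co: "\<forall>j. corner_odd P j = Some (po j)"
    and pnz: "\<forall>j. pe j \<noteq> 0"
    and Eh: "\<forall>j. 1 - pe j - po (j+1) \<noteq> 0"
    and Fh: "\<forall>j. (1 - pe j) * (1 - po (j+2)) - pe (j+1) * po (j+1) \<noteq> 0"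
  shows "corner_even (T3 P) i = Some (pe (i+1) * (1 - pe i - po (i+1)) / ((1 - pe i) * (1 - po (i+2)) - pe (i+1) * po (i+1)))"
    and "corner_odd (T3 P) i = Some (po (i+3) * (1 - pe (i+3) - po (i+4)) / ((1 - pe (i+2)) * (1 - po (i+4)) - pe (i+3) * po (i+3)))"
proof -
  define m where "m = i - 2"
  define Pm where "Pm j = P (j + m)" for j
  have nzm: "\<forall>j. dt (Pm j) (Pm (j+1)) (Pm (j+2)) \<noteq> 0"
  proof
    fix j show "dt (Pm j) (Pm (j+1)) (Pm (j+2)) \<noteq> 0"
      using nz[rule_format, of "j+m"] unfolding Pm_def by (simp add: algebra_simps)
  qed
  obtain s where snz: "\<forall>j. s j \<noteq> 0"
    and sN: "\<forall>j\<ge>0. dt (s j *\<^sub>R Pm j) (s (j+1) *\<^sub>R Pm (j+1)) (s (j+2) *\<^sub>R Pm (j+2)) = 1"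
    using normalize[OF nzm] by blast
  define Q where "Q j = s j *\<^sub>R Pm j" for j
  have QN: "\<And>j. 0 \<le> j \<Longrightarrow> dt (Q j) (Q (j+1)) (Q (j+2)) = 1" using sN unfolding Q_def by simp
  have Qfun: "Q = (\<lambda>j. s j *\<^sub>R Pm j)" unfolding Q_def ..
  have Pmfun: "Pm = (\<lambda>j. P (j + m))" unfolding Pm_def ..
  have ceQ: "\<And>j. corner_even Q j = Some (pe (j+m))"
    unfolding Qfun ce_scale[OF snz] Pmfun ce_shift using ce by simp
  have coQ: "\<And>j. corner_odd Q j = Some (po (j+m))"
    unfolding Qfun co_scale[OF snz] Pmfun co_shift using co by simp
  have pnzQ: "\<And>j. pe (j+m) \<noteq> 0" using pnz by simp
  have EhQ: "\<And>j. 1 - pe (j+m) - po (j+1+m) \<noteq> 0"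
    using Eh by (metis add.commute add.left_commute)
  have FhQ: "\<And>j. (1 - pe (j+m)) * (1 - po (j+2+m)) - pe (j+1+m) * po (j+1+m) \<noteq> 0"
    using Fh by (metis add.commute add.left_commute)
  note C = core[of Q "\<lambda>j. pe (j+m)" "\<lambda>j. po (j+m)", OF QN ceQ coQ pnzQ EhQ FhQ]
  define mu where "mu i = s i * s (i+3) * s (i+1) * s (i+4)" for i
  have munz: "\<forall>j. mu j \<noteq> 0" using snz unfolding mu_def by simp
  have T3Q: "T3 Q = (\<lambda>k. mu k *\<^sub>R T3 P (k + m))"
    unfolding Qfun T3_scale Pmfun T3_shift mu_def ..
  have ev: "corner_even (T3 Q) 2 = corner_even (T3 P) i"
    unfolding T3Q ce_scale[OF munz] ce_shift m_def by simp
  have od: "corner_odd (T3 Q) 2 = corner_odd (T3 P) i"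
    unfolding T3Q co_scale[OF munz] co_shift m_def by simp
  have idx: "3 + m = i + 1" "2 + m = i" "4 + m = i + 2" "5 + m = i + 3" "6 + m = i + 4"
    unfolding m_def by simp_all
  show "corner_even (T3 P) i = Some (pe (i+1) * (1 - pe i - po (i+1)) / ((1 - pe i) * (1 - po (i+2)) - pe (i+1) * po (i+1)))"
    using C(1) unfolding ev idx .
  show "corner_odd (T3 P) i = Some (po (i+3) * (1 - pe (i+3) - po (i+4)) / ((1 - pe (i+2)) * (1 - po (i+4)) - pe (i+3) * po (i+3)))"
    using C(2) unfolding od idx .
qed

lemma T3_cc: "T3 P k = dt (P k) (P (k+3)) (P (k+4)) *\<^sub>R P (k+1) - dt (P k) (P (k+3)) (P (k+1)) *\<^sub>R P (k+4)"
  unfolding T3_def meet_def line_through_def cc ..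

lemma T3_mono:
  fixes P :: "int \<Rightarrow> real^3"
  assumes mono: "\<forall>i. \<exists>c::real. c \<noteq> 0 \<and> P (i + int n) = c *\<^sub>R (M *v P i)" and inv: "invertible M"
  shows "\<exists>c::real. c \<noteq> 0 \<and> T3 P (i + int n) = c *\<^sub>R (M *v T3 P i)"
proof -
  obtain c0 where c0: "c0 \<noteq> 0" "P (i + int n) = c0 *\<^sub>R (M *v P i)" using mono by blast
  obtain c1 where c1: "c1 \<noteq> 0" "P (i + 1 + int n) = c1 *\<^sub>R (M *v P (i+1))" using mono by blast
  obtain c3 where c3: "c3 \<noteq> 0" "P (i + 3 + int n) = c3 *\<^sub>R (M *v P (i+3))" using mono by blast
  obtain c4 where c4: "c4 \<noteq> 0" "P (i + 4 + int n) = c4 *\<^sub>R (M *v P (i+4))" using mono by blast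
  have dM: "det M \<noteq> 0" using inv by (simp add: invertible_det_nz)
  have idx: "i + int n + 3 = i + 3 + int n" "i + int n + 4 = i + 4 + int n" "i + int n + 1 = i + 1 + int n"
    by simp_all
  have "T3 P (i + int n) = (c0 * c3 * c4 * det M * dt (P i) (P (i+3)) (P (i+4))) *\<^sub>R (c1 *\<^sub>R (M *v P (i+1)))
      - (c0 * c3 * c1 * det M * dt (P i) (P (i+3)) (P (i+1))) *\<^sub>R (c4 *\<^sub>R (M *v P (i+4)))"
    unfolding T3_cc[of P "i + int n"] idx c0(2) c1(2) c3(2) c4(2) dt_scale dt_mat by (simp add: mult.assoc)
  also have "\<dots> = (c0 * c1 * c3 * c4 * det M) *\<^sub>R (M *v T3 P i)"
    unfolding T3_cc[of P i] by (simp add: algebra_simps)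
  finally have eq: "T3 P (i + int n) = (c0 * c1 * c3 * c4 * det M) *\<^sub>R (M *v T3 P i)" .
  have "c0 * c1 * c3 * c4 * det M \<noteq> 0" using c0 c1 c3 c4 dM by simp
  with eq show ?thesis by blast
qed



lemma key1: "(p1::real) * (1 - p0 - q1) - ((1 - p0) * (1 - q2) - p1 * q1) = (1 - p0) * (p1 - 1 + q2)"
  by (simp add: algebra_simps)
lemma key2: "(q3::real) * (1 - p3 - q4) - ((1 - p2) * (1 - q4) - p3 * q3) = (1 - q4) * (q3 - 1 + p2)"
  by (simp add: algebra_simps)

lemma pos_prod: "0 < (a::real) \<Longrightarrow> 0 < b \<Longrightarrow> 0 < a * b" by simp
lemma neg_prod1: "(a::real) < 0 \<Longrightarrow> 0 < b \<Longrightarrow> a * b < 0" by (simp add: mult_neg_pos)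
lemma neg_prod2: "0 < (a::real) \<Longrightarrow> b < 0 \<Longrightarrow> a * b < 0" by (simp add: mult_pos_neg)
lemma pos_prod2: "(a::real) < 0 \<Longrightarrow> b < 0 \<Longrightarrow> 0 < a * b" by (simp add: mult_neg_neg)

lemma IJ_F: "p0 < 0 \<Longrightarrow> p1 < 0 \<Longrightarrow> 0 < q1 \<Longrightarrow> q1 < 1 \<Longrightarrow> 0 < q2 \<Longrightarrow> q2 < 1 \<Longrightarrow>
    (0::real) < (1 - p0) * (1 - q2) - p1 * q1"
  using pos_prod[of "1-p0" "1-q2"] neg_prod1[of p1 q1] by linarith
lemma IJ_e: "p0 < 0 \<Longrightarrow> p1 < 0 \<Longrightarrow> 0 < q1 \<Longrightarrow> q1 < 1 \<Longrightarrow> 0 < q2 \<Longrightarrow> q2 < 1 \<Longrightarrow>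
    p1 * (1 - p0 - q1) / ((1 - p0) * (1 - q2) - p1 * q1) < (0::real)"
  using IJ_F[of p0 p1 q1 q2] neg_prod1[of p1 "1 - p0 - q1"] by (simp add: divide_neg_pos)
lemma IJ_o: "p2 < 0 \<Longrightarrow> p3 < 0 \<Longrightarrow> 0 < q3 \<Longrightarrow> q3 < 1 \<Longrightarrow> 0 < q4 \<Longrightarrow> q4 < 1 \<Longrightarrow>
    0 < q3 * (1 - p3 - q4) / ((1 - p2) * (1 - q4) - p3 * q3) \<and>
    q3 * (1 - p3 - q4) / ((1 - p2) * (1 - q4) - p3 * q3) < (1::real)"
proof -
  assume a: "p2 < 0" "p3 < 0" "0 < q3" "q3 < 1" "0 < q4" "q4 < 1"
  have F: "0 < (1 - p2) * (1 - q4) - p3 * q3" using IJ_F[of p2 p3 q3 q4] a by simp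
  have n: "0 < q3 * (1 - p3 - q4)" using a by (intro pos_prod) auto
  have l: "q3 * (1 - p3 - q4) < (1 - p2) * (1 - q4) - p3 * q3"
    using key2[of q3 p3 q4 p2] neg_prod2[of "1 - q4" "q3 - 1 + p2"] a by linarith
  show ?thesis using F n l by (simp add: divide_less_eq_1_pos)
qed

lemma KJ_F: "1 < p0 \<Longrightarrow> 1 < p1 \<Longrightarrow> 0 < q1 \<Longrightarrow> q1 < 1 \<Longrightarrow> 0 < q2 \<Longrightarrow> q2 < 1 \<Longrightarrow>
    (1 - p0) * (1 - q2) - p1 * q1 < (0::real)"
  using neg_prod1[of "1-p0" "1-q2"] pos_prod[of p1 q1] by linarith
lemma KJ_e: "1 < p0 \<Longrightarrow> 1 < p1 \<Longrightarrow> 0 < q1 \<Longrightarrow> q1 < 1 \<Longrightarrow> 0 < q2 \<Longrightarrow> q2 < 1 \<Longrightarrow>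
    (1::real) < p1 * (1 - p0 - q1) / ((1 - p0) * (1 - q2) - p1 * q1)"
proof -
  assume a: "1 < p0" "1 < p1" "0 < q1" "q1 < 1" "0 < q2" "q2 < 1"
  have F: "(1 - p0) * (1 - q2) - p1 * q1 < 0" using KJ_F a by simp
  have l: "p1 * (1 - p0 - q1) < (1 - p0) * (1 - q2) - p1 * q1"
    using key1[of p1 p0 q1 q2] neg_prod1[of "1 - p0" "p1 - 1 + q2"] a by linarith
  show ?thesis using F l by (simp add: less_divide_eq_1_neg)
qed
lemma KJ_o: "1 < p2 \<Longrightarrow> 1 < p3 \<Longrightarrow> 0 < q3 \<Longrightarrow> q3 < 1 \<Longrightarrow> 0 < q4 \<Longrightarrow> q4 < 1 \<Longrightarrow>
    0 < q3 * (1 - p3 - q4) / ((1 - p2) * (1 - q4) - p3 * q3) \<and>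
    q3 * (1 - p3 - q4) / ((1 - p2) * (1 - q4) - p3 * q3) < (1::real)"
proof -
  assume a: "1 < p2" "1 < p3" "0 < q3" "q3 < 1" "0 < q4" "q4 < 1"
  have F: "(1 - p2) * (1 - q4) - p3 * q3 < 0" using KJ_F[of p2 p3 q3 q4] a by simp
  have n: "q3 * (1 - p3 - q4) < 0" using a by (intro neg_prod2) auto
  have l: "(1 - p2) * (1 - q4) - p3 * q3 < q3 * (1 - p3 - q4)"
    using key2[of q3 p3 q4 p2] pos_prod[of "1 - q4" "q3 - 1 + p2"] a by linarith
  show ?thesis using F n l by (simp add: divide_less_eq_1_neg zero_less_divide_iff)
qed

lemma JI_F: "0 < p0 \<Longrightarrow> p0 < 1 \<Longrightarrow> 0 < p1 \<Longrightarrow> p1 < 1 \<Longrightarrow> q1 < 0 \<Longrightarrow> q2 < 0 \<Longrightarrow>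
    (0::real) < (1 - p0) * (1 - q2) - p1 * q1"
  using pos_prod[of "1-p0" "1-q2"] neg_prod2[of p1 q1] by linarith
lemma JI_e: "0 < p0 \<Longrightarrow> p0 < 1 \<Longrightarrow> 0 < p1 \<Longrightarrow> p1 < 1 \<Longrightarrow> q1 < 0 \<Longrightarrow> q2 < 0 \<Longrightarrow>
    0 < p1 * (1 - p0 - q1) / ((1 - p0) * (1 - q2) - p1 * q1) \<and>
    p1 * (1 - p0 - q1) / ((1 - p0) * (1 - q2) - p1 * q1) < (1::real)"
proof -
  assume a: "0 < p0" "p0 < 1" "0 < p1" "p1 < 1" "q1 < 0" "q2 < 0"
  have F: "0 < (1 - p0) * (1 - q2) - p1 * q1" using JI_F a by simp
  have n: "0 < p1 * (1 - p0 - q1)" using a by (intro pos_prod) auto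
  have l: "p1 * (1 - p0 - q1) < (1 - p0) * (1 - q2) - p1 * q1"
    using key1[of p1 p0 q1 q2] neg_prod2[of "1 - p0" "p1 - 1 + q2"] a by linarith
  show ?thesis using F n l by (simp add: divide_less_eq_1_pos)
qed
lemma JI_o: "0 < p2 \<Longrightarrow> p2 < 1 \<Longrightarrow> 0 < p3 \<Longrightarrow> p3 < 1 \<Longrightarrow> q3 < 0 \<Longrightarrow> q4 < 0 \<Longrightarrow>
    q3 * (1 - p3 - q4) / ((1 - p2) * (1 - q4) - p3 * q3) < (0::real)"
  using JI_F[of p2 p3 q3 q4] neg_prod1[of q3 "1 - p3 - q4"] by (simp add: divide_neg_pos)

lemma JK_F: "0 < p0 \<Longrightarrow> p0 < 1 \<Longrightarrow> 0 < p1 \<Longrightarrow> p1 < 1 \<Longrightarrow> 1 < q1 \<Longrightarrow> 1 < q2 \<Longrightarrow>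
    (1 - p0) * (1 - q2) - p1 * q1 < (0::real)"
  using neg_prod2[of "1-p0" "1-q2"] pos_prod[of p1 q1] by linarith
lemma JK_e: "0 < p0 \<Longrightarrow> p0 < 1 \<Longrightarrow> 0 < p1 \<Longrightarrow> p1 < 1 \<Longrightarrow> 1 < q1 \<Longrightarrow> 1 < q2 \<Longrightarrow>
    0 < p1 * (1 - p0 - q1) / ((1 - p0) * (1 - q2) - p1 * q1) \<and>
    p1 * (1 - p0 - q1) / ((1 - p0) * (1 - q2) - p1 * q1) < (1::real)"
proof -
  assume a: "0 < p0" "p0 < 1" "0 < p1" "p1 < 1" "1 < q1" "1 < q2"
  have F: "(1 - p0) * (1 - q2) - p1 * q1 < 0" using JK_F a by simp
  have n: "p1 * (1 - p0 - q1) < 0" using a by (intro neg_prod2) auto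
  have l: "(1 - p0) * (1 - q2) - p1 * q1 < p1 * (1 - p0 - q1)"
    using key1[of p1 p0 q1 q2] pos_prod[of "1 - p0" "p1 - 1 + q2"] a by linarith
  show ?thesis using F n l by (simp add: divide_less_eq_1_neg zero_less_divide_iff)
qed
lemma JK_o: "0 < p2 \<Longrightarrow> p2 < 1 \<Longrightarrow> 0 < p3 \<Longrightarrow> p3 < 1 \<Longrightarrow> 1 < q3 \<Longrightarrow> 1 < q4 \<Longrightarrow>
    (1::real) < q3 * (1 - p3 - q4) / ((1 - p2) * (1 - q4) - p3 * q3)"
proof -
  assume a: "0 < p2" "p2 < 1" "0 < p3" "p3 < 1" "1 < q3" "1 < q4"
  have F: "(1 - p2) * (1 - q4) - p3 * q3 < 0" using JK_F[of p2 p3 q3 q4] a by simp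
  have l: "q3 * (1 - p3 - q4) < (1 - p2) * (1 - q4) - p3 * q3"
    using key2[of q3 p3 q4 p2] neg_prod1[of "1 - q4" "q3 - 1 + p2"] a by linarith
  show ?thesis using F l by (simp add: less_divide_eq_1_neg)
qed



lemma preserve:
  fixes X Y :: "real set"
  assumes S: "in_S n X Y P"
    and hX: "\<And>p0 p1 q1 q2. p0\<in>X \<Longrightarrow> p1\<in>X \<Longrightarrow> q1\<in>Y \<Longrightarrow> q2\<in>Y \<Longrightarrow>
               p1 * (1 - p0 - q1) / ((1 - p0) * (1 - q2) - p1 * q1) \<in> X"
    and hY: "\<And>p2 p3 q3 q4. p2\<in>X \<Longrightarrow> p3\<in>X \<Longrightarrow> q3\<in>Y \<Longrightarrow> q4\<in>Y \<Longrightarrow>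
               q3 * (1 - p3 - q4) / ((1 - p2) * (1 - q4) - p3 * q3) \<in> Y"
    and hE: "\<And>p q. p\<in>X \<Longrightarrow> q\<in>Y \<Longrightarrow> 1 - p - q \<noteq> 0"
    and hF: "\<And>p0 p1 q1 q2. p0\<in>X \<Longrightarrow> p1\<in>X \<Longrightarrow> q1\<in>Y \<Longrightarrow> q2\<in>Y \<Longrightarrow>
               (1 - p0) * (1 - q2) - p1 * q1 \<noteq> 0"
    and X0: "0 \<notin> X" and Y0: "0 \<notin> Y"
  shows "in_S n X Y (T3 P)"
proof -
  from S have tw: "twisted_ngon n P"
    and cor: "\<forall>i. \<exists>x y. corner_even P i = Some x \<and> x \<in> X \<and> corner_odd P i = Some y \<and> y \<in> Y"
    unfolding in_S_def by auto
  from tw obtain M :: "real^3^3" where Minv: "invertible M"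
    and mono: "\<forall>i. \<exists>c::real. c \<noteq> 0 \<and> P (i + int n) = c *\<^sub>R (M *v P i)"
    and ncol: "\<forall>i. \<not> proj_collinear (P i) (P (i+1)) (P (i+2))"
    unfolding twisted_ngon_def by auto
  have nz: "\<forall>j. dt (P j) (P (j+1)) (P (j+2)) \<noteq> 0"
    using ncol unfolding proj_collinear_def dt_def by auto
  define pe where "pe i = the (corner_even P i)" for i
  define po where "po i = the (corner_odd P i)" for i
  have cp: "corner_even P j = Some (pe j) \<and> pe j \<in> X \<and> corner_odd P j = Some (po j) \<and> po j \<in> Y" for j
    using cor[rule_format, of j] unfolding pe_def po_def by auto
  have ce: "\<forall>j. corner_even P j = Some (pe j)" and co: "\<forall>j. corner_odd P j = Some (po j)"
    and peX: "\<And>j. pe j \<in> X" and poY: "\<And>j. po j \<in> Y" using cp by auto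
  have pnz: "\<forall>j. pe j \<noteq> 0" using peX X0 by metis
  have Eh: "\<forall>j. 1 - pe j - po (j+1) \<noteq> 0" using hE peX poY by blast
  have Fh: "\<forall>j. (1 - pe j) * (1 - po (j+2)) - pe (j+1) * po (j+1) \<noteq> 0" using hF peX poY by blast
  note TC = T3_corners[OF nz ce co pnz Eh Fh]
  have cor': "corner_even (T3 P) i = Some (pe (i+1) * (1 - pe i - po (i+1)) / ((1 - pe i) * (1 - po (i+2)) - pe (i+1) * po (i+1)))
     \<and> corner_odd (T3 P) i = Some (po (i+3) * (1 - pe (i+3) - po (i+4)) / ((1 - pe (i+2)) * (1 - po (i+4)) - pe (i+3) * po (i+3)))"
    for i using TC by blast
  have corT: "\<forall>i. \<exists>x y. corner_even (T3 P) i = Some x \<and> x \<in> X \<and> corner_odd (T3 P) i = Some y \<and> y \<in> Y"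
  proof
    fix i
    show "\<exists>x y. corner_even (T3 P) i = Some x \<and> x \<in> X \<and> corner_odd (T3 P) i = Some y \<and> y \<in> Y"
      using cor'[of i] hX[OF peX peX poY poY] hY[OF peX peX poY poY] by blast
  qed
  have dtT: "dt (T3 P j) (T3 P (j+1)) (T3 P (j+2)) \<noteq> 0" for j
  proof -
    obtain y where y: "corner_odd (T3 P) (j+2) = Some y" "y \<in> Y" using corT by blast
    have y0: "y \<noteq> 0" using y(2) Y0 by metis
    have idx: "j + 2 - 1 = j + 1" "j + 2 - 2 = j" by simp_all
    have "dt (T3 P (j+2)) (T3 P (j+1)) (T3 P j) \<noteq> 0"
      using co_formula[of "T3 P" "j+2", unfolded y(1) idx] y0 by (auto split: if_splits)
    then show ?thesis using dt_sw13[of "T3 P j" "T3 P (j+1)" "T3 P (j+2)"] by simp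
  qed
  have tw': "twisted_ngon n (T3 P)"
    unfolding twisted_ngon_def
  proof (intro conjI allI exI[of _ M])
    fix i
    show "T3 P i \<noteq> 0"
    proof
      assume "T3 P i = 0"
      then have "dt (T3 P i) (T3 P (i+1)) (T3 P (i+2)) = 0" by (simp add: dt_def)
      then show False using dtT by blast
    qed
    show "\<not> proj_collinear (T3 P i) (T3 P (i + 1)) (T3 P (i + 2))"
      using dtT[of i] unfolding proj_collinear_def dt_def .
    show "invertible M" by (rule Minv)
    show "\<exists>c::real. c \<noteq> 0 \<and> T3 P (i + int n) = c *\<^sub>R (M *v T3 P i)"
      by (rule T3_mono[OF mono Minv])
  qed
  show ?thesis unfolding in_S_def using tw' corT by blast
qed

theorem mainTheorem10:
  fixes n :: nat
  assumes "n \<ge> 2"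
  shows "(\<forall>P. in_S n Iint Jint P \<longrightarrow> in_S n Iint Jint (T3 P)) \<and>
         (\<forall>P. in_S n Kint Jint P \<longrightarrow> in_S n Kint Jint (T3 P)) \<and>
         (\<forall>P. in_S n Jint Iint P \<longrightarrow> in_S n Jint Iint (T3 P)) \<and>
         (\<forall>P. in_S n Jint Kint P \<longrightarrow> in_S n Jint Kint (T3 P))"
proof (intro conjI allI impI)
  fix P
  assume "in_S n Iint Jint P"
  then show "in_S n Iint Jint (T3 P)"
  proof (rule preserve)
    fix p0 p1 q1 q2 :: real
    assume a: "p0 \<in> Iint" "p1 \<in> Iint" "q1 \<in> Jint" "q2 \<in> Jint"
    then show "p1 * (1 - p0 - q1) / ((1 - p0) * (1 - q2) - p1 * q1) \<in> Iint"
      using IJ_e unfolding Iint_def Jint_def by auto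
    show "(1 - p0) * (1 - q2) - p1 * q1 \<noteq> 0"
      using IJ_F a unfolding Iint_def Jint_def by force
  next
    fix p2 p3 q3 q4 :: real
    assume "p2 \<in> Iint" "p3 \<in> Iint" "q3 \<in> Jint" "q4 \<in> Jint"
    then show "q3 * (1 - p3 - q4) / ((1 - p2) * (1 - q4) - p3 * q3) \<in> Jint"
      using IJ_o unfolding Iint_def Jint_def by auto
  next
    fix p q :: real assume "p \<in> Iint" "q \<in> Jint"
    then show "1 - p - q \<noteq> 0" unfolding Iint_def Jint_def by auto
  qed (auto simp: Iint_def Jint_def)
next
  fix P
  assume "in_S n Kint Jint P"
  then show "in_S n Kint Jint (T3 P)"
  proof (rule preserve)
    fix p0 p1 q1 q2 :: real
    assume a: "p0 \<in> Kint" "p1 \<in> Kint" "q1 \<in> Jint" "q2 \<in> Jint"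
    then show "p1 * (1 - p0 - q1) / ((1 - p0) * (1 - q2) - p1 * q1) \<in> Kint"
      using KJ_e unfolding Kint_def Jint_def by auto
    show "(1 - p0) * (1 - q2) - p1 * q1 \<noteq> 0"
      using KJ_F a unfolding Kint_def Jint_def by force
  next
    fix p2 p3 q3 q4 :: real
    assume "p2 \<in> Kint" "p3 \<in> Kint" "q3 \<in> Jint" "q4 \<in> Jint"
    then show "q3 * (1 - p3 - q4) / ((1 - p2) * (1 - q4) - p3 * q3) \<in> Jint"
      using KJ_o unfolding Kint_def Jint_def by auto
  next
    fix p q :: real assume "p \<in> Kint" "q \<in> Jint"
    then show "1 - p - q \<noteq> 0" unfolding Kint_def Jint_def by auto
  qed (auto simp: Kint_def Jint_def)
next
  fix P
  assume "in_S n Jint Iint P"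
  then show "in_S n Jint Iint (T3 P)"
  proof (rule preserve)
    fix p0 p1 q1 q2 :: real
    assume a: "p0 \<in> Jint" "p1 \<in> Jint" "q1 \<in> Iint" "q2 \<in> Iint"
    then show "p1 * (1 - p0 - q1) / ((1 - p0) * (1 - q2) - p1 * q1) \<in> Jint"
      using JI_e unfolding Iint_def Jint_def by auto
    show "(1 - p0) * (1 - q2) - p1 * q1 \<noteq> 0"
      using JI_F a unfolding Iint_def Jint_def by force
  next
    fix p2 p3 q3 q4 :: real
    assume "p2 \<in> Jint" "p3 \<in> Jint" "q3 \<in> Iint" "q4 \<in> Iint"
    then show "q3 * (1 - p3 - q4) / ((1 - p2) * (1 - q4) - p3 * q3) \<in> Iint"
      using JI_o unfolding Iint_def Jint_def by auto
  next
    fix p q :: real assume "p \<in> Jint" "q \<in> Iint"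
    then show "1 - p - q \<noteq> 0" unfolding Iint_def Jint_def by auto
  qed (auto simp: Iint_def Jint_def)
next
  fix P
  assume "in_S n Jint Kint P"
  then show "in_S n Jint Kint (T3 P)"
  proof (rule preserve)
    fix p0 p1 q1 q2 :: real
    assume a: "p0 \<in> Jint" "p1 \<in> Jint" "q1 \<in> Kint" "q2 \<in> Kint"
    then show "p1 * (1 - p0 - q1) / ((1 - p0) * (1 - q2) - p1 * q1) \<in> Jint"
      using JK_e unfolding Kint_def Jint_def by auto
    show "(1 - p0) * (1 - q2) - p1 * q1 \<noteq> 0"
      using JK_F a unfolding Kint_def Jint_def by force
  next
    fix p2 p3 q3 q4 :: real
    assume "p2 \<in> Jint" "p3 \<in> Jint" "q3 \<in> Kint" "q4 \<in> Kint"
    then show "q3 * (1 - p3 - q4) / ((1 - p2) * (1 - q4) - p3 * q3) \<in> Kint"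
      using JK_o unfolding Kint_def Jint_def by auto
  next
    fix p q :: real assume "p \<in> Jint" "q \<in> Kint"
    then show "1 - p - q \<noteq> 0" unfolding Kint_def Jint_def by auto
  qed (auto simp: Kint_def Jint_def)
qed

end
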